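(* Let $0<q<1$. Define the $q$-Hermite polynomials $H_{n,q}(x)$ by \[ H_q(t)\,e_q(tx)=\sum_{n=0}^\infty H_{n,q}(x)\frac{t^n}{[n]_q!},\qquad H_q(t)=\sum_{n=0}^\infty(-1)^nq^{n(n-1)}\frac{t^{2n}}{[2n]_q!!}. \] Then for every integer $n\ge0$, $H_{n,q}(x)$ satisfies the $q$-difference equation \[ q^{n-2}D_{q,x}^2H_{n,q}(x)-xq^nD_{q,x}H_{n,q}(x)+[n]_qH_{n,q}(qx)=0. \]
   Context: $[n]_q=\frac{1-q^n}{1-q}$, $[0]_q!=1$, $[n]_q!=[n]_q\cdots[1]_q$, $[0]_q!!=1$, $[2n]_q!!=[2n]_q[2n-2]_q\cdots[2]_q$, $e_q(t)=\sum_{n\ge0}\frac{t^n}{[n]_q!}$. The $q$-derivative is $D_{q,x}f(x)=\frac{f(qx)-f(x)}{(q-1)x}$ (on polynomials $D_{q,x}x^n=[n]_qx^{n-1}$), and $D_{q,x}^2=D_{q,x}\circ D_{q,x}$. *)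

theory Defs
  imports "HOL-Computational_Algebra.Computational_Algebra"
begin

definition qint :: "real \<Rightarrow> nat \<Rightarrow> real" where
  "qint q n = (1 - q ^ n) / (1 - q)"

definition qfact :: "real \<Rightarrow> nat \<Rightarrow> real" where
  "qfact q n = (\<Prod>i = 1..n. qint q i)"

definition qdfact_even :: "real \<Rightarrow> nat \<Rightarrow> real" where
  "qdfact_even q m = (\<Prod>i = 1..m. qint q (2 * i))"

text \<open>e_q(t x) as a formal power series in t with coefficients polynomials in x:
  coefficient of t^n is x^n / [n]_q!.\<close>
definition eq_fps :: "real \<Rightarrow> real poly fps" where
  "eq_fps q = Abs_fps (\<lambda>n. monom (1 / qfact q n) n)"

definition Hq_fps :: "real \<Rightarrow> real poly fps" where
  "Hq_fps q = Abs_fps (\<lambda>k. if even k then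
       [: (-1) ^ (k div 2) * q ^ ((k div 2) * (k div 2 - 1)) / qdfact_even q (k div 2) :]
     else 0)"

definition qHermite :: "real \<Rightarrow> nat \<Rightarrow> real poly" where
  "qHermite q n = smult (qfact q n) (fps_nth (Hq_fps q * eq_fps q) n)"

text \<open>q-derivative on polynomials: D_q x^k = [k]_q x^(k-1), extended linearly
  (agrees with (f(qx) - f(x))/((q-1)x) for x \<noteq> 0).\<close>
definition qD :: "real \<Rightarrow> real poly \<Rightarrow> real poly" where
  "qD q p = (\<Sum>k\<le>degree p. monom (coeff p k * qint q k) (k - 1))"

end

theory Submission
  imports Defs
begin

lemma coeff_pcomp_lin: "coeff (pcompose p [:0, c::real:]) j = c ^ j * coeff p j"
proof (induction p arbitrary: j)
  case 0 then show ?case by simp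
next
  case (pCons a p)
  show ?case
    by (cases j) (simp_all add: pcompose_pCons pCons.IH mult.assoc)
qed

lemma qint0 [simp]: "qint q 0 = 0" by (simp add: qint_def)

lemma coeff_qD: "coeff (qD q p) j = coeff p (Suc j) * qint q (Suc j)"
proof -
  have "coeff (qD q p) j = (\<Sum>k\<le>degree p. if k - 1 = j then coeff p k * qint q k else 0)"
    by (simp add: qD_def coeff_sum coeff_monom)
  also have "\<dots> = (\<Sum>k\<le>degree p. if k = Suc j then coeff p k * qint q k else 0)"
    apply (rule sum.cong, simp)
    apply (case_tac x, auto)
    done
  also have "\<dots> = (if Suc j \<le> degree p then coeff p (Suc j) * qint q (Suc j) else 0)"
    by simp
  also have "\<dots> = coeff p (Suc j) * qint q (Suc j)"
    using coeff_eq_0[of p "Suc j"] by auto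
  finally show ?thesis .
qed

definition aa :: "real \<Rightarrow> nat \<Rightarrow> real" where
  "aa q k = (-1) ^ k * q ^ (k * (k - 1)) / qdfact_even q k"

definition cc :: "real \<Rightarrow> nat \<Rightarrow> nat \<Rightarrow> real" where
  "cc q n j = (if j \<le> n \<and> even (n - j) then qfact q n / qfact q j * aa q ((n - j) div 2) else 0)"

lemma coeff_qHermite: "coeff (qHermite q n) j = cc q n j"
proof -
  have "coeff (fps_nth (Hq_fps q * eq_fps q) n) j =
     (\<Sum>i=0..n. (if even i then (-1) ^ (i div 2) * q ^ ((i div 2) * (i div 2 - 1)) / qdfact_even q (i div 2) else 0)
        * (if n - i = j then 1 / qfact q (n - i) else 0))"
    unfolding fps_mult_nth coeff_sum Hq_fps_def eq_fps_def fps_nth_Abs_fps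
    by (rule sum.cong) (auto simp: coeff_monom)
  also have "\<dots> = (\<Sum>i=0..n. if i = n - j \<and> j \<le> n then
        (if even i then aa q (i div 2) else 0) * (1 / qfact q j) else 0)"
    by (rule sum.cong) (auto simp: aa_def)
  also have "\<dots> = (if j \<le> n then (if even (n - j) then aa q ((n - j) div 2) else 0) * (1 / qfact q j) else 0)"
    by (simp add: sum.delta' conj_commute)
  finally show ?thesis
    by (auto simp: qHermite_def cc_def)
qed

lemma qfact_Suc: "qfact q (Suc n) = qfact q n * qint q (Suc n)"
  by (simp add: qfact_def prod.cl_ivl_Suc)

lemma qdfact_Suc: "qdfact_even q (Suc n) = qdfact_even q n * qint q (2 * Suc n)"
  by (simp add: qdfact_even_def prod.cl_ivl_Suc)

lemma qint_pos: "0 < q \<Longrightarrow> q < 1 \<Longrightarrow> 0 < k \<Longrightarrow> qint q k > 0"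
  unfolding qint_def using power_strict_decreasing[of 0 k q] by auto

lemma qfact_pos: "0 < q \<Longrightarrow> q < 1 \<Longrightarrow> qfact q k > 0"
  unfolding qfact_def by (rule prod_pos) (auto intro: qint_pos)

lemma qdfact_pos: "0 < q \<Longrightarrow> q < 1 \<Longrightarrow> qdfact_even q k > 0"
  unfolding qdfact_even_def by (rule prod_pos) (auto intro: qint_pos)

lemma key:
  assumes q: "0 < q" "q < 1"
  shows "q powi (int n - 2) * (cc q n (Suc (Suc j)) * qint q (Suc (Suc j)) * qint q (Suc j))
     - q ^ n * (cc q n j * qint q j) + qint q n * (q ^ j * cc q n j) = 0"
proof (cases "j \<le> n \<and> even (n - j)")
  case False
  then have "cc q n j = 0" "cc q n (Suc (Suc j)) = 0" by (auto simp: cc_def)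
  then show ?thesis by simp
next
  case True
  then obtain k where k: "n = j + 2 * k" by (metis evenE le_add_diff_inverse)
  show ?thesis
  proof (cases k)
    case 0
    then have "cc q n (Suc (Suc j)) = 0" using k by (auto simp: cc_def)
    then show ?thesis using k 0 by simp
  next
    case (Suc m)
    have n: "n = Suc (Suc (j + 2 * m))" using k Suc by simp
    have pw: "q powi (int n - 2) = q ^ (j + 2 * m)"
    proof -
      have "int n - 2 = int (j + 2 * m)" using n by simp
      then show ?thesis by (metis power_int_of_nat)
    qed
    have c1: "cc q n (Suc (Suc j)) = qfact q n / qfact q (Suc (Suc j)) * aa q m"
      using n by (auto simp: cc_def)
    have c0: "cc q n j = qfact q n / qfact q j * aa q (Suc m)"
      using n by (auto simp: cc_def)
    have e: "Suc m * (Suc m - 1) = m * (m - 1) + 2 * m" by (cases m) auto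
    have am: "aa q (Suc m) = - aa q m * q ^ (2 * m) / qint q (2 * Suc m)"
    proof -
      have pe: "q ^ (Suc m * (Suc m - 1)) = q ^ (m * (m - 1)) * q ^ (2 * m)"
        by (simp only: e power_add)
      show ?thesis unfolding aa_def qdfact_Suc pe by simp
    qed
    have p1: "qint q j > 0 \<or> j = 0" using qint_pos[OF q, of j] by auto
    have F: "qfact q j > 0" "qdfact_even q m > 0" "qint q (Suc j) > 0" "qint q (Suc (Suc j)) > 0"
       "qint q (2 * Suc m) > 0" "qfact q n > 0"
      using qfact_pos[OF q] qdfact_pos[OF q] qint_pos[OF q] by auto
    have qq: "1 - q \<noteq> 0" using q by simp
    have "qint q n * q ^ j - q ^ n * qint q j = q ^ j * qint q (2 * Suc m)"
    proof -
      have qn: "q ^ n = q ^ j * q ^ (2 * Suc m)" using n by (simp add: power_add[symmetric])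
      have "qint q n * q ^ j - q ^ n * qint q j = ((1 - q ^ n) * q ^ j - q ^ n * (1 - q ^ j)) / (1 - q)"
        unfolding qint_def by (metis (no_types) diff_divide_distrib times_divide_eq_left times_divide_eq_right)
      also have "\<dots> = (q ^ j - q ^ n) / (1 - q)"
        by (simp add: algebra_simps)
      also have "\<dots> = q ^ j * qint q (2 * Suc m)"
        unfolding qint_def qn using qq by (simp add: field_simps)
      finally show ?thesis .
    qed
    note X = this
    have fs: "qfact q (Suc (Suc j)) = qfact q j * qint q (Suc j) * qint q (Suc (Suc j))"
      by (simp add: qfact_Suc)
    have "q powi (int n - 2) * (cc q n (Suc (Suc j)) * qint q (Suc (Suc j)) * qint q (Suc j))
     - q ^ n * (cc q n j * qint q j) + qint q n * (q ^ j * cc q n j)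
      = q ^ (j + 2 * m) * (qfact q n / qfact q j * aa q m)
        + (qfact q n / qfact q j * aa q (Suc m)) * (qint q n * q ^ j - q ^ n * qint q j)"
      unfolding pw c1 c0 fs using F by (simp add: field_simps)
    also have "\<dots> = q ^ (j + 2 * m) * (qfact q n / qfact q j * aa q m)
        + (qfact q n / qfact q j * (- aa q m * q ^ (2 * m) / qint q (2 * Suc m))) * (q ^ j * qint q (2 * Suc m))"
      unfolding X am ..
    also have "\<dots> = 0" using F by (simp add: field_simps power_add)
    finally show ?thesis .
  qed
qed

lemma coeff_x_mult: "coeff ([:0, 1:] * (r::real poly)) j = (if j = 0 then 0 else coeff r (j - 1))"
  by (cases j) simp_all

theorem theorem11:
  fixes q :: real and n :: nat
  assumes "0 < q" and "q < 1"
  shows "smult (q powi (int n - 2)) (qD q (qD q (qHermite q n)))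
           - [:0, 1:] * smult (q ^ n) (qD q (qHermite q n))
           + smult (qint q n) (pcompose (qHermite q n) [:0, q:]) = 0"
proof (rule poly_eqI)
  fix j
  have "coeff ([:0, 1:] * smult (q ^ n) (qD q (qHermite q n))) j = q ^ n * (cc q n j * qint q j)"
    by (cases j) (simp_all add: coeff_qD coeff_qHermite)
  then show "coeff (smult (q powi (int n - 2)) (qD q (qD q (qHermite q n)))
           - [:0, 1:] * smult (q ^ n) (qD q (qHermite q n))
           + smult (qint q n) (pcompose (qHermite q n) [:0, q:])) j = coeff 0 j"
    using key[OF assms, of n j]
    by (simp add: coeff_qD coeff_qHermite coeff_pcomp_lin mult.assoc)
qed

end
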